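(* Let $a>0$, $b>0$, $S^1=\mathbb{R}/\mathbb{Z}$, and equip $\mathrm{Diff}(S^1)$ with the right-invariant metric given at the identity by $\langle\!\langle u,v\rangle\!\rangle=\int_{S^1}(a\,uv+b\,u_xv_x)\,dx$. Let $A=a-b\partial_x^2$ and define bilinear maps $$T(u,v)=A^{-1}\Big(a\,uv+\tfrac b2u_xv_x\Big),\qquad Q(u,v)=-\partial_x^2A^{-1}\Big(a\,uv+\tfrac b2u_xv_x\Big).$$ Then the sectional curvature $S(u,v)=\langle\!\langle R(u,v)v,u\rangle\!\rangle$ satisfies, for all vector fields $u,v$ on $S^1$, both $$S(u,v)=-\frac a2\int_{S^1}(uv_x-vu_x)^2\,dx+\frac ab\langle\!\langle T(u,u),T(v,v)\rangle\!\rangle-\frac ab\langle\!\langle T(u,v),T(u,v)\rangle\!\rangle$$ and $$S(u,v)=\frac1a\int_{S^1}\Big(a(uv_x-vu_x)+\tfrac b2(v_xu_{xx}-u_xv_{xx})\Big)^2dx+\frac ba\langle\!\langle Q(u,u),Q(v,v)\rangle\!\rangle-\frac ba\langle\!\langle Q(u,v),Q(u,v)\rangle\!\rangle.$$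
   Context: $R$ is the curvature tensor of the Levi-Civita connection of the right-invariant metric at the identity; vector fields on $S^1$ are identified with periodic functions. *)

theory Defs
  imports "HOL-Analysis.Analysis"
begin

text \<open>Vector fields on S^1 = R/Z: smooth (C-infinity) 1-periodic real functions on R.\<close>
definition smooth_fun :: "(real \<Rightarrow> real) \<Rightarrow> bool" where
  "smooth_fun f \<longleftrightarrow> (\<forall>n x. ((deriv ^^ n) f) differentiable (at x))"

definition vfield :: "(real \<Rightarrow> real) \<Rightarrow> bool" where
  "vfield f \<longleftrightarrow> smooth_fun f \<and> (\<forall>x. f (x + 1) = f x)"

definition intS1 :: "(real \<Rightarrow> real) \<Rightarrow> real" where
  "intS1 f = integral {0..1} f"

definition ip :: "real \<Rightarrow> real \<Rightarrow> (real \<Rightarrow> real) \<Rightarrow> (real \<Rightarrow> real) \<Rightarrow> real" where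
  "ip a b u v = intS1 (\<lambda>x. a * u x * v x + b * deriv u x * deriv v x)"

text \<open>Lie bracket of vector fields (the sign convention does not affect the curvature
  expression S(u,v)).\<close>
definition vbracket :: "(real \<Rightarrow> real) \<Rightarrow> (real \<Rightarrow> real) \<Rightarrow> real \<Rightarrow> real" where
  "vbracket u v = (\<lambda>x. u x * deriv v x - deriv u x * v x)"

text \<open>Levi-Civita connection of the invariant metric at the identity, via the Koszul formula
  for invariant fields: 2 <<nabla_u v, w>> = <<[u,v],w>> - <<[v,w],u>> + <<[w,u],v>>.\<close>
definition nabla :: "real \<Rightarrow> real \<Rightarrow> (real \<Rightarrow> real) \<Rightarrow> (real \<Rightarrow> real) \<Rightarrow> real \<Rightarrow> real" where
  "nabla a b u v = (THE z. vfield z \<and> (\<forall>w. vfield w \<longrightarrow>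
      ip a b z w = (ip a b (vbracket u v) w - ip a b (vbracket v w) u + ip a b (vbracket w u) v) / 2))"

definition curv :: "real \<Rightarrow> real \<Rightarrow> (real \<Rightarrow> real) \<Rightarrow> (real \<Rightarrow> real) \<Rightarrow> (real \<Rightarrow> real) \<Rightarrow> real \<Rightarrow> real" where
  "curv a b u v w = (\<lambda>x. nabla a b u (nabla a b v w) x - nabla a b v (nabla a b u w) x
      - nabla a b (vbracket u v) w x)"

definition sect :: "real \<Rightarrow> real \<Rightarrow> (real \<Rightarrow> real) \<Rightarrow> (real \<Rightarrow> real) \<Rightarrow> real" where
  "sect a b u v = ip a b (curv a b u v v) u"

definition Ainv :: "real \<Rightarrow> real \<Rightarrow> (real \<Rightarrow> real) \<Rightarrow> real \<Rightarrow> real" where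
  "Ainv a b f = (THE g. vfield g \<and> (\<forall>x. a * g x - b * deriv (deriv g) x = f x))"

definition Tmap :: "real \<Rightarrow> real \<Rightarrow> (real \<Rightarrow> real) \<Rightarrow> (real \<Rightarrow> real) \<Rightarrow> real \<Rightarrow> real" where
  "Tmap a b u v = Ainv a b (\<lambda>x. a * u x * v x + b / 2 * deriv u x * deriv v x)"

definition Qmap :: "real \<Rightarrow> real \<Rightarrow> (real \<Rightarrow> real) \<Rightarrow> (real \<Rightarrow> real) \<Rightarrow> real \<Rightarrow> real" where
  "Qmap a b u v = (\<lambda>x. - deriv (deriv (Ainv a b (\<lambda>y. a * u y * v y + b / 2 * deriv u y * deriv v y))) x)"

end

theory Submission
  imports Defs
begin


fun Cn :: "nat \<Rightarrow> (real \<Rightarrow> real) \<Rightarrow> bool" where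
  "Cn 0 f = (\<forall>x. f differentiable (at x))"
| "Cn (Suc n) f = ((\<forall>x. f differentiable (at x)) \<and> Cn n (deriv f))"

lemma Cn_iff: "Cn n f \<longleftrightarrow> (\<forall>m\<le>n. \<forall>x. (deriv^^m) f differentiable (at x))"
proof (induction n arbitrary: f)
  case 0 then show ?case by simp
next
  case (Suc n)
  have "(\<forall>m\<le>Suc n. \<forall>x. (deriv^^m) f differentiable (at x)) \<longleftrightarrow>
        (\<forall>x. f differentiable (at x)) \<and> (\<forall>m\<le>n. \<forall>x. (deriv^^m) (deriv f) differentiable (at x))"
    (is "?L \<longleftrightarrow> ?R")
  proof
    assume L: ?L
    show ?R
    proof
      show "\<forall>x. f differentiable (at x)" using L[rule_format, of 0] by simp
      show "\<forall>m\<le>n. \<forall>x. (deriv^^m) (deriv f) differentiable (at x)"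
        using L by (metis Suc_le_mono funpow_Suc_right o_apply)
    qed
  next
    assume R: ?R
    show ?L
    proof (intro allI impI)
      fix m x assume "m \<le> Suc n"
      then show "(deriv^^m) f differentiable (at x)"
        using R by (cases m) (auto simp: funpow_Suc_right simp del: funpow.simps)
    qed
  qed
  then show ?case using Suc by simp
qed

lemma smooth_Cn: "smooth_fun f \<longleftrightarrow> (\<forall>n. Cn n f)"
  unfolding smooth_fun_def Cn_iff by blast

lemma Cn_diff: "Cn n f \<Longrightarrow> f differentiable (at x)"
  by (cases n) auto

lemma Cn_Suc_deriv: "Cn (Suc n) f \<Longrightarrow> Cn n (deriv f)" by simp

lemma Cn_mono: "Cn (Suc n) f \<Longrightarrow> Cn n f"
  by (induction n arbitrary: f) auto

lemma DERIV_d: "f differentiable (at x) \<Longrightarrow> (f has_real_derivative deriv f x) (at x)"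
  using DERIV_deriv_iff_real_differentiable by blast

lemma deriv_add_fun:
  fixes f g :: "real \<Rightarrow> real"
  assumes "\<And>x. f differentiable (at x)" "\<And>x. g differentiable (at x)"
  shows "deriv (\<lambda>x. f x + g x) = (\<lambda>x. deriv f x + deriv g x)"
proof (rule ext, rule DERIV_imp_deriv)
  fix x show "((\<lambda>x. f x + g x) has_real_derivative deriv f x + deriv g x) (at x)"
    using DERIV_add[OF DERIV_d[OF assms(1)] DERIV_d[OF assms(2)]] .
qed

lemma deriv_mult_fun:
  fixes f g :: "real \<Rightarrow> real"
  assumes "\<And>x. f differentiable (at x)" "\<And>x. g differentiable (at x)"
  shows "deriv (\<lambda>x. f x * g x) = (\<lambda>x. f x * deriv g x + deriv f x * g x)"
proof (rule ext, rule DERIV_imp_deriv)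
  fix x show "((\<lambda>x. f x * g x) has_real_derivative f x * deriv g x + deriv f x * g x) (at x)"
    using DERIV_mult[OF DERIV_d[OF assms(1)] DERIV_d[OF assms(2)]] by (simp add: algebra_simps)
qed

lemma diff_add: fixes f g :: "real \<Rightarrow> real"
  assumes "\<And>x. f differentiable (at x)" "\<And>x. g differentiable (at x)"
  shows "(\<lambda>x. f x + g x) differentiable (at x)"
  using DERIV_add[OF DERIV_d[OF assms(1)] DERIV_d[OF assms(2)]] real_differentiable_def by blast

lemma diff_mult: fixes f g :: "real \<Rightarrow> real"
  assumes "\<And>x. f differentiable (at x)" "\<And>x. g differentiable (at x)"
  shows "(\<lambda>x. f x * g x) differentiable (at x)"
  using DERIV_mult[OF DERIV_d[OF assms(1)] DERIV_d[OF assms(2)]] real_differentiable_def by blast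

lemma Cn_add: "Cn n f \<Longrightarrow> Cn n g \<Longrightarrow> Cn n (\<lambda>x. f x + g x)"
proof (induction n arbitrary: f g)
  case 0 then show ?case by (auto intro!: diff_add)
next
  case (Suc n)
  then show ?case
    by (auto intro!: diff_add simp: deriv_add_fun)
qed

lemma Cn_mult: "Cn n f \<Longrightarrow> Cn n g \<Longrightarrow> Cn n (\<lambda>x. f x * g x)"
proof (induction n arbitrary: f g)
  case 0 then show ?case by (auto intro!: diff_mult)
next
  case (Suc n)
  have "Cn n (\<lambda>x. f x * deriv g x)" "Cn n (\<lambda>x. deriv f x * g x)"
    using Suc.IH Suc.prems Cn_mono by auto
  then show ?case using Suc.prems
    by (auto intro!: diff_mult Cn_add simp: deriv_mult_fun)
qed

lemma Cn_const: "Cn n (\<lambda>x. c)"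
  by (induction n arbitrary: c) auto

lemma Cn_primitive:
  assumes "\<And>x. (F has_real_derivative f x) (at x)" "Cn n f"
  shows "Cn (Suc n) F"
proof -
  have "deriv F = f" using assms(1) by (auto intro!: ext DERIV_imp_deriv)
  moreover have "F differentiable (at x)" for x using assms(1) real_differentiable_def by blast
  ultimately show ?thesis using assms(2) by simp
qed

lemma smooth_add: "smooth_fun f \<Longrightarrow> smooth_fun g \<Longrightarrow> smooth_fun (\<lambda>x. f x + g x)"
  by (simp add: smooth_Cn Cn_add)
lemma smooth_mult: "smooth_fun f \<Longrightarrow> smooth_fun g \<Longrightarrow> smooth_fun (\<lambda>x. f x * g x)"
  by (simp add: smooth_Cn Cn_mult)
lemma smooth_const: "smooth_fun (\<lambda>x. c)"
  by (simp add: smooth_Cn Cn_const)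
lemma smooth_deriv: "smooth_fun f \<Longrightarrow> smooth_fun (deriv f)"
  by (metis smooth_Cn Cn_Suc_deriv)
lemma smooth_diffble: "smooth_fun f \<Longrightarrow> f differentiable (at x)"
  by (metis smooth_Cn Cn_diff)
lemma smooth_primitive:
  assumes "\<And>x. (F has_real_derivative f x) (at x)" "smooth_fun f"
  shows "smooth_fun F"
  using assms by (metis smooth_Cn Cn_primitive Cn_mono)

lemma smooth_exp: "smooth_fun (\<lambda>x. c * exp (k * x))"
proof -
  have "Cn n (\<lambda>x. c * exp (k * x))" for n
  proof (induction n arbitrary: c)
    case 0 then show ?case unfolding Cn.simps real_differentiable_def by (auto intro!: derivative_eq_intros)
  next
    case (Suc n)
    have dd: "deriv (\<lambda>x. c * exp (k * x)) = (\<lambda>x. (c*k) * exp (k * x))"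
      by (rule ext, rule DERIV_imp_deriv) (auto intro!: derivative_eq_intros)
    have "(\<lambda>x. c * exp (k * x)) differentiable (at x)" for x
      unfolding real_differentiable_def by (auto intro!: derivative_eq_intros)
    then show ?case using Suc dd by simp
  qed
  then show ?thesis by (simp add: smooth_Cn)
qed



lemma vf_smooth: "vfield f \<Longrightarrow> smooth_fun f" by (simp add: vfield_def)
lemma vf_per: "vfield f \<Longrightarrow> f (x + 1) = f x" by (simp add: vfield_def)
lemma vf_diffble: "vfield f \<Longrightarrow> f differentiable (at x)"
  by (simp add: vfield_def smooth_diffble)
lemma vf_DERIV: "vfield f \<Longrightarrow> (f has_real_derivative deriv f x) (at x)"
  by (simp add: DERIV_d vf_diffble)

lemma vf_const[simp]: "vfield (\<lambda>x. c)"
  by (simp add: vfield_def smooth_const)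
lemma vf_add[simp]: "vfield f \<Longrightarrow> vfield g \<Longrightarrow> vfield (\<lambda>x. f x + g x)"
  by (simp add: vfield_def smooth_add)
lemma vf_mult[simp]: "vfield f \<Longrightarrow> vfield g \<Longrightarrow> vfield (\<lambda>x. f x * g x)"
  by (simp add: vfield_def smooth_mult)
lemma vf_cmult[simp]: "vfield f \<Longrightarrow> vfield (\<lambda>x. c * f x)"
  using vf_mult[OF vf_const, of f c] by simp
lemma vf_neg[simp]: "vfield f \<Longrightarrow> vfield (\<lambda>x. - f x)"
  using vf_cmult[of f "-1"] by simp
lemma vf_diff[simp]: "vfield f \<Longrightarrow> vfield g \<Longrightarrow> vfield (\<lambda>x. f x - g x)"
  using vf_add[of f "\<lambda>x. - g x"] by simp
lemma vf_pow2[simp]: "vfield f \<Longrightarrow> vfield (\<lambda>x. (f x)^2)"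
  using vf_mult[of f f] by (simp add: power2_eq_square)

lemma vf_divc[simp]: "vfield f \<Longrightarrow> vfield (\<lambda>x. f x / c)"
  using vf_cmult[of f "1/c"] by simp

lemma vf_deriv[simp]: "vfield f \<Longrightarrow> vfield (deriv f)"
proof -
  assume f: "vfield f"
  have "deriv f (x + 1) = deriv f x" for x
  proof -
    have "(f has_real_derivative deriv f (x + 1)) (at (x + 1))" using vf_DERIV[OF f] .
    then have "((\<lambda>x. f (x + 1)) has_real_derivative deriv f (x + 1)) (at x)"
      using DERIV_shift by blast
    moreover have "(\<lambda>x. f (x + 1)) = f" using f by (auto simp: vf_per)
    ultimately show ?thesis using DERIV_imp_deriv by fastforce
  qed
  then show ?thesis using f by (simp add: vfield_def smooth_deriv)
qed

lemma d_add[simp]: "vfield f \<Longrightarrow> vfield g \<Longrightarrow> deriv (\<lambda>x. f x + g x) = (\<lambda>x. deriv f x + deriv g x)"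
  by (rule deriv_add_fun) (auto simp: vf_diffble)
lemma d_mult[simp]: "vfield f \<Longrightarrow> vfield g \<Longrightarrow> deriv (\<lambda>x. f x * g x) = (\<lambda>x. f x * deriv g x + deriv f x * g x)"
  by (rule deriv_mult_fun) (auto simp: vf_diffble)
lemma d_cmult[simp]: "vfield f \<Longrightarrow> deriv (\<lambda>x. c * f x) = (\<lambda>x. c * deriv f x)"
  using d_mult[OF vf_const, of f c] by simp
lemma d_divc[simp]: "vfield f \<Longrightarrow> deriv (\<lambda>x. f x / c) = (\<lambda>x. deriv f x / c)"
  using d_cmult[of f "1/c"] by simp
lemma d_neg[simp]: "vfield f \<Longrightarrow> deriv (\<lambda>x. - f x) = (\<lambda>x. - deriv f x)"
  using d_cmult[of f "-1"] by simp
lemma d_diff[simp]: "vfield f \<Longrightarrow> vfield g \<Longrightarrow> deriv (\<lambda>x. f x - g x) = (\<lambda>x. deriv f x - deriv g x)"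
  using d_add[of f "\<lambda>x. - g x"] by simp
lemma d_pow2[simp]: "vfield f \<Longrightarrow> deriv (\<lambda>x. (f x)^2) = (\<lambda>x. 2 * f x * deriv f x)"
  using d_mult[of f f] by (simp add: power2_eq_square algebra_simps)

lemma vf_cont: "vfield f \<Longrightarrow> continuous_on S f"
  by (meson continuous_at_imp_continuous_on differentiable_imp_continuous_within vf_diffble)

lemma vf_integrable: "vfield f \<Longrightarrow> f integrable_on {0..1}"
  by (simp add: integrable_continuous_real vf_cont)

lemma int_add: "vfield f \<Longrightarrow> vfield g \<Longrightarrow> intS1 (\<lambda>x. f x + g x) = intS1 f + intS1 g"
  unfolding intS1_def by (simp add: integral_add vf_integrable)
lemma int_diff: "vfield f \<Longrightarrow> vfield g \<Longrightarrow> intS1 (\<lambda>x. f x - g x) = intS1 f - intS1 g"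
  unfolding intS1_def by (simp add: integral_diff vf_integrable)
lemma int_cmult: "intS1 (\<lambda>x. c * f x) = c * intS1 f"
  unfolding intS1_def by simp
lemma int_divc: "intS1 (\<lambda>x. f x / c) = intS1 f / c"
  unfolding intS1_def by simp
lemma int_neg: "intS1 (\<lambda>x. - f x) = - intS1 f"
  unfolding intS1_def by simp
lemma int_zero: "intS1 (\<lambda>x. 0) = 0"
  unfolding intS1_def by simp

lemma int_deriv: "vfield h \<Longrightarrow> intS1 (deriv h) = 0"
proof -
  assume h: "vfield h"
  have "(deriv h has_integral h 1 - h 0) {0..1}"
    by (rule fundamental_theorem_of_calculus)
       (auto simp: has_real_derivative_iff_has_vector_derivative[symmetric] intro: DERIV_subset vf_DERIV[OF h])
  moreover have "h 1 = h 0" using vf_per[OF h, of 0] by simp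
  ultimately show ?thesis unfolding intS1_def by (simp add: integral_unique)
qed

lemma int_ibp:
  assumes "vfield F2" "vfield H" "\<And>x. F1 x = F2 x + deriv H x"
  shows "intS1 F1 = intS1 F2"
proof -
  have "F1 = (\<lambda>x. F2 x + deriv H x)" using assms(3) by auto
  then show ?thesis using assms by (simp add: int_add int_deriv)
qed

lemma int_cong: "(\<And>x. f x = g x) \<Longrightarrow> intS1 f = intS1 g"
  by (metis ext)

lemma per_nat: "vfield f \<Longrightarrow> f (x + real n) = f x"
proof (induction n arbitrary: x)
  case 0 then show ?case by simp
next
  case (Suc n)
  have "f (x + real (Suc n)) = f ((x + real n) + 1)" by (simp add: algebra_simps)
  also have "\<dots> = f (x + real n)" by (rule vf_per[OF Suc.prems])
  also have "\<dots> = f x" by (rule Suc.IH[OF Suc.prems])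
  finally show ?case .
qed

lemma per_int: "vfield f \<Longrightarrow> f (x + of_int n) = f x"
proof (cases "n \<ge> 0")
  case True
  assume f: "vfield f"
  then show ?thesis using per_nat[OF f, of x "nat n"] True by simp
next
  case False
  assume f: "vfield f"
  have "f (x + of_int n + real (nat (-n))) = f (x + of_int n)" by (rule per_nat[OF f])
  then show ?thesis using False by simp
qed

lemma vf_zero_from_interval:
  assumes "vfield d" "\<And>x. x \<in> {0..1} \<Longrightarrow> d x = 0"
  shows "d x = 0"
proof -
  have "d x = d (x - of_int \<lfloor>x\<rfloor> + of_int \<lfloor>x\<rfloor>)" by simp
  also have "\<dots> = d (x - of_int \<lfloor>x\<rfloor>)" by (rule per_int[OF assms(1)])
  also have "\<dots> = 0"
  proof (rule assms(2))
    show "x - of_int \<lfloor>x\<rfloor> \<in> {0..1}" using frac_lt_1[of x] frac_ge_0[of x] by (simp add: frac_def)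
  qed
  finally show ?thesis .
qed

lemma int_nonneg_zero:
  assumes "vfield f" "\<And>x. f x \<ge> 0" "intS1 f = 0" "x \<in> {0..1}"
  shows "f x = 0"
proof -
  have "(f has_integral 0) (cbox 0 1)"
    using assms(3) vf_integrable[OF assms(1)] unfolding intS1_def
    by (metis box_real(2) has_integral_integral)
  moreover have "box (0::real) 1 \<noteq> {}" by simp
  moreover have "x \<in> cbox 0 1" using assms(4) by simp
  ultimately show ?thesis
    using has_integral_0_cbox_imp_0[of 0 1 f x] assms(2) vf_cont[OF assms(1)] by blast
qed

lemma ip_expand: "ip a b f g = intS1 (\<lambda>x. a * f x * g x + b * deriv f x * deriv g x)"
  by (simp add: ip_def)

lemma ip_self_zero:
  assumes "a > 0" "b > 0" "vfield d" "ip a b d d = 0"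
  shows "d = (\<lambda>x. 0)"
proof -
  let ?f = "\<lambda>x. a * d x * d x + b * deriv d x * deriv d x"
  have vf: "vfield ?f" using assms by simp
  have nn: "?f x \<ge> 0" for x using assms
    by (metis add_nonneg_nonneg mult.assoc mult_nonneg_nonneg less_imp_le zero_le_square)
  have "intS1 ?f = 0" using assms(4) unfolding ip_def .
  then have z: "?f x = 0" if "x \<in> {0..1}" for x
    using int_nonneg_zero[OF vf nn] that by blast
  then have "d x = 0" if "x \<in> {0..1}" for x
  proof -
    have e: "a * (d x * d x) + b * (deriv d x * deriv d x) = 0" using z[OF that] by (simp add: mult.assoc)
    have "a * (d x * d x) \<ge> 0" "b * (deriv d x * deriv d x) \<ge> 0" using assms(1,2) by simp_all
    then have "a * (d x * d x) = 0" using e by linarith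
    then show ?thesis using assms(1) by simp
  qed
  then show ?thesis using vf_zero_from_interval[OF assms(3)] by auto
qed



lemma antider_geom:
  fixes \<psi> :: "real \<Rightarrow> real"
  assumes sm: "smooth_fun \<psi>" and lam: "lam \<noteq> 1" and per: "\<And>x. \<psi> (x + 1) = lam * \<psi> x"
  shows "\<exists>\<Phi>. (\<forall>x. (\<Phi> has_real_derivative \<psi> x) (at x)) \<and> (\<forall>x. \<Phi> (x + 1) = lam * \<Phi> x)"
proof -
  have "isCont \<psi> x" for x using smooth_diffble[OF sm] DERIV_d DERIV_isCont by blast
  then obtain F where F: "\<And>x. (F has_vector_derivative \<psi> x) (at x)"
    using einterval_antiderivative[of "-\<infinity>" "\<infinity>" \<psi>] by auto
  have F': "(F has_real_derivative \<psi> x) (at x)" for x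
    using F has_real_derivative_iff_has_vector_derivative by blast
  define D where "D x = F (x + 1) - lam * F x" for x
  have "(D has_real_derivative 0) (at x)" for x
  proof -
    have "((\<lambda>x. F (x + 1)) has_real_derivative \<psi> (x + 1)) (at x)"
      using F'[of "x+1"] DERIV_shift by blast
    then have "(D has_real_derivative \<psi> (x + 1) - lam * \<psi> x) (at x)"
      unfolding D_def by (auto intro!: derivative_eq_intros F')
    then show ?thesis using per by simp
  qed
  then have Dc: "D x = D 0" for x using DERIV_isconst_all by blast
  define C where "C = D 0 / (lam - 1)"
  define \<Phi> where "\<Phi> x = F x + C" for x
  have "(\<Phi> has_real_derivative \<psi> x) (at x)" for x
    unfolding \<Phi>_def by (auto intro!: derivative_eq_intros F')
  moreover have "\<Phi> (x + 1) = lam * \<Phi> x" for x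
  proof -
    have "F (x + 1) = lam * F x + D 0" using Dc[of x] unfolding D_def by simp
    moreover have "D 0 + C = lam * C" using lam unfolding C_def by (simp add: field_simps)
    ultimately show ?thesis unfolding \<Phi>_def by (simp add: algebra_simps)
  qed
  ultimately show ?thesis by blast
qed

lemma Ainv_exists:
  assumes a: "a > 0" and b: "b > 0" and f: "vfield f"
  shows "\<exists>g. vfield g \<and> (\<forall>x. a * g x - b * deriv (deriv g) x = f x)"
proof -
  define k where "k = sqrt (a / b)"
  have k: "k > 0" using a b unfolding k_def by simp
  have kk: "b * (k * k) = a" using a b unfolding k_def by (simp add: less_imp_le)
  define \<psi>1 where "\<psi>1 x = - f x * exp (- k * x) / (2 * k * b)" for x
  define \<psi>2 where "\<psi>2 x = f x * exp (k * x) / (2 * k * b)" for x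
  have sf: "smooth_fun f" using f vf_smooth by blast
  have s1: "smooth_fun \<psi>1"
  proof -
    have "smooth_fun (\<lambda>x. f x * ((- 1 / (2 * k * b)) * exp (- k * x)))"
      by (rule smooth_mult[OF sf smooth_exp])
    moreover have "\<psi>1 = (\<lambda>x. f x * ((- 1 / (2 * k * b)) * exp (- k * x)))"
      unfolding \<psi>1_def by (auto simp: field_simps)
    ultimately show ?thesis by simp
  qed
  have s2: "smooth_fun \<psi>2"
  proof -
    have "smooth_fun (\<lambda>x. f x * ((1 / (2 * k * b)) * exp (k * x)))"
      by (rule smooth_mult[OF sf smooth_exp])
    moreover have "\<psi>2 = (\<lambda>x. f x * ((1 / (2 * k * b)) * exp (k * x)))"
      unfolding \<psi>2_def by (auto simp: field_simps)
    ultimately show ?thesis by simp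
  qed
  have p1: "\<psi>1 (x + 1) = exp (- k) * \<psi>1 x" for x
    unfolding \<psi>1_def using vf_per[OF f, of x] by (simp add: algebra_simps exp_add[symmetric])
  have p2: "\<psi>2 (x + 1) = exp k * \<psi>2 x" for x
    unfolding \<psi>2_def using vf_per[OF f, of x] by (simp add: algebra_simps exp_add[symmetric])
  have l1: "exp (- k) \<noteq> 1" using k by simp
  have l2: "exp k \<noteq> 1" using k by simp
  obtain \<Phi>1 where P1: "\<And>x. (\<Phi>1 has_real_derivative \<psi>1 x) (at x)" "\<And>x. \<Phi>1 (x + 1) = exp (- k) * \<Phi>1 x"
    using antider_geom[OF s1 l1 p1] by blast
  obtain \<Phi>2 where P2: "\<And>x. (\<Phi>2 has_real_derivative \<psi>2 x) (at x)" "\<And>x. \<Phi>2 (x + 1) = exp k * \<Phi>2 x"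
    using antider_geom[OF s2 l2 p2] by blast
  define g where "g x = exp (k * x) * \<Phi>1 x + exp (- k * x) * \<Phi>2 x" for x
  have canc: "exp (k * x) * \<psi>1 x + exp (- k * x) * \<psi>2 x = 0" for x
    unfolding \<psi>1_def \<psi>2_def by (simp add: field_simps exp_add[symmetric])
  have canc2: "exp (k * x) * \<psi>1 x - exp (- k * x) * \<psi>2 x = - f x / (k * b)" for x
    using k b unfolding \<psi>1_def \<psi>2_def by (simp add: field_simps exp_add[symmetric])
  define g1 where "g1 x = k * (exp (k * x) * \<Phi>1 x - exp (- k * x) * \<Phi>2 x)" for x
  have dg: "(g has_real_derivative g1 x) (at x)" for x
  proof -
    have "(g has_real_derivative (k * exp (k * x) * \<Phi>1 x + exp (k * x) * \<psi>1 x)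
           + (- k * exp (- k * x) * \<Phi>2 x + exp (- k * x) * \<psi>2 x)) (at x)"
      unfolding g_def by (auto intro!: derivative_eq_intros P1 P2)
    moreover have "(k * exp (k * x) * \<Phi>1 x + exp (k * x) * \<psi>1 x)
           + (- k * exp (- k * x) * \<Phi>2 x + exp (- k * x) * \<psi>2 x)
         = g1 x + (exp (k * x) * \<psi>1 x + exp (- k * x) * \<psi>2 x)"
      unfolding g1_def by (simp add: algebra_simps)
    then have "(k * exp (k * x) * \<Phi>1 x + exp (k * x) * \<psi>1 x)
           + (- k * exp (- k * x) * \<Phi>2 x + exp (- k * x) * \<psi>2 x) = g1 x"
      using canc[of x] by linarith
    ultimately show ?thesis by simp
  qed
  have dg1: "(g1 has_real_derivative k * k * g x - f x / b) (at x)" for x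
  proof -
    have "(g1 has_real_derivative k * ((k * exp (k * x) * \<Phi>1 x + exp (k * x) * \<psi>1 x)
           - (- k * exp (- k * x) * \<Phi>2 x + exp (- k * x) * \<psi>2 x))) (at x)"
      unfolding g1_def by (auto intro!: derivative_eq_intros P1 P2)
    moreover have "k * ((k * exp (k * x) * \<Phi>1 x + exp (k * x) * \<psi>1 x)
           - (- k * exp (- k * x) * \<Phi>2 x + exp (- k * x) * \<psi>2 x)) = k * k * g x - f x / b"
    proof -
      have "k * ((k * exp (k * x) * \<Phi>1 x + exp (k * x) * \<psi>1 x)
           - (- k * exp (- k * x) * \<Phi>2 x + exp (- k * x) * \<psi>2 x))
          = k * k * g x + k * (exp (k * x) * \<psi>1 x - exp (- k * x) * \<psi>2 x)"
        unfolding g_def by (simp add: algebra_simps)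
      also have "\<dots> = k * k * g x - f x / b" using canc2[of x] k by simp
      finally show ?thesis .
    qed
    ultimately show ?thesis by simp
  qed
  have Dg: "deriv g = g1" using dg by (auto intro!: ext DERIV_imp_deriv)
  have Dg1: "deriv g1 = (\<lambda>x. k * k * g x - f x / b)" using dg1 by (auto intro!: ext DERIV_imp_deriv)
  have ode: "a * g x - b * deriv (deriv g) x = f x" for x
    unfolding Dg Dg1 using b kk by (simp add: algebra_simps)
  have sm: "smooth_fun g"
  proof -
    have "smooth_fun \<Phi>1" using smooth_primitive[OF P1(1) s1] .
    moreover have "smooth_fun \<Phi>2" using smooth_primitive[OF P2(1) s2] .
    ultimately have "smooth_fun (\<lambda>x. (1 * exp (k * x)) * \<Phi>1 x + (1 * exp (- k * x)) * \<Phi>2 x)"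
      by (intro smooth_add smooth_mult smooth_exp)
    then show ?thesis unfolding g_def by simp
  qed
  have per: "g (x + 1) = g x" for x
  proof -
    have "g (x + 1) = exp (k * x) * exp k * (exp (- k) * \<Phi>1 x) + exp (- k * x) * exp (- k) * (exp k * \<Phi>2 x)"
      unfolding g_def P1(2) P2(2) by (simp add: algebra_simps exp_add[symmetric])
    also have "\<dots> = g x" unfolding g_def by (simp add: algebra_simps exp_add[symmetric])
    finally show ?thesis .
  qed
  have "vfield g" using sm per by (simp add: vfield_def)
  then show ?thesis using ode by blast
qed

lemma Ainv_unique:
  assumes a: "a > 0" and b: "b > 0" and g1: "vfield g1" and g2: "vfield g2"
    and e1: "\<And>x. a * g1 x - b * deriv (deriv g1) x = f x"
    and e2: "\<And>x. a * g2 x - b * deriv (deriv g2) x = f x"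
  shows "g1 = g2"
proof -
  define d where "d x = g1 x - g2 x" for x
  have dfun: "d = (\<lambda>x. g1 x - g2 x)" unfolding d_def by auto
  have vd: "vfield d" unfolding dfun using g1 g2 by simp
  have ode: "a * d x - b * deriv (deriv d) x = 0" for x
    unfolding dfun using g1 g2 e1[of x] e2[of x] by (simp add: algebra_simps)
  have "ip a b d d = intS1 (\<lambda>x. 0)"
    unfolding ip_def
  proof (rule int_ibp[where H = "\<lambda>x. b * (d x * deriv d x)"])
    show "vfield (\<lambda>x. 0::real)" by simp
    show "vfield (\<lambda>x. b * (d x * deriv d x))" using vd by simp
    fix x
    show "a * d x * d x + b * deriv d x * deriv d x = 0 + deriv (\<lambda>x. b * (d x * deriv d x)) x"
      using vd ode[of x] by (simp add: algebra_simps)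
  qed
  then have "ip a b d d = 0" by (simp add: int_zero)
  then have "d = (\<lambda>x. 0)" using ip_self_zero a b vd by blast
  then have "d x = 0" for x by simp
  then show ?thesis unfolding d_def by (simp add: fun_eq_iff)
qed

lemma Ainv_prop:
  assumes a: "a > 0" and b: "b > 0" and f: "vfield f"
  shows "vfield (Ainv a b f) \<and> (\<forall>x. a * Ainv a b f x - b * deriv (deriv (Ainv a b f)) x = f x)"
proof -
  have "\<exists>!g. vfield g \<and> (\<forall>x. a * g x - b * deriv (deriv g) x = f x)"
    using Ainv_exists[OF a b f] Ainv_unique[OF a b] by blast
  then show ?thesis unfolding Ainv_def by (rule theI')
qed

lemma Ainv_vf: "a > 0 \<Longrightarrow> b > 0 \<Longrightarrow> vfield f \<Longrightarrow> vfield (Ainv a b f)"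
  using Ainv_prop by blast
lemma Ainv_ode: "a > 0 \<Longrightarrow> b > 0 \<Longrightarrow> vfield f \<Longrightarrow> a * Ainv a b f x - b * deriv (deriv (Ainv a b f)) x = f x"
  using Ainv_prop by blast
lemma Ainv_eq:
  assumes "a > 0" "b > 0" "vfield f" "vfield g" "\<And>x. a * g x - b * deriv (deriv g) x = f x"
  shows "Ainv a b f = g"
  using Ainv_unique[OF assms(1,2) Ainv_vf[OF assms(1-3)] assms(4) Ainv_ode[OF assms(1-3)] assms(5)] .



definition Aop :: "real \<Rightarrow> real \<Rightarrow> (real \<Rightarrow> real) \<Rightarrow> real \<Rightarrow> real" where
  "Aop a b f = (\<lambda>x. a * f x - b * deriv (deriv f) x)"
definition Kf :: "real \<Rightarrow> real \<Rightarrow> (real \<Rightarrow> real) \<Rightarrow> (real \<Rightarrow> real) \<Rightarrow> real \<Rightarrow> real" where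
  "Kf a b y x = (\<lambda>t. 2 * Aop a b x t * deriv y t + deriv (Aop a b x) t * y t)"
definition Nx :: "real \<Rightarrow> real \<Rightarrow> (real \<Rightarrow> real) \<Rightarrow> (real \<Rightarrow> real) \<Rightarrow> real \<Rightarrow> real" where
  "Nx a b x y = (\<lambda>t. Ainv a b (\<lambda>s. Aop a b (vbracket x y) s + Kf a b x y s + Kf a b y x s) t / 2)"
definition Yf :: "real \<Rightarrow> real \<Rightarrow> (real \<Rightarrow> real) \<Rightarrow> (real \<Rightarrow> real) \<Rightarrow> real \<Rightarrow> real" where
  "Yf a b x y = (\<lambda>t. a * x t * y t + b / 2 * deriv x t * deriv y t)"

lemma Tmap_Yf: "Tmap a b x y = Ainv a b (Yf a b x y)"
  by (simp add: Tmap_def Yf_def)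

lemma vf_Aop[simp]: "vfield f \<Longrightarrow> vfield (Aop a b f)" by (simp add: Aop_def)
lemma vf_Yf[simp]: "vfield x \<Longrightarrow> vfield y \<Longrightarrow> vfield (Yf a b x y)"
proof -
  assume "vfield x" "vfield y"
  then have "vfield (\<lambda>t. a * x t * y t + (b / 2) * (deriv x t * deriv y t))" by simp
  then show ?thesis unfolding Yf_def by (simp add: algebra_simps)
qed
lemma vf_br[simp]: "vfield x \<Longrightarrow> vfield y \<Longrightarrow> vfield (vbracket x y)" by (simp add: vbracket_def)
lemma vf_Kf[simp]: "vfield x \<Longrightarrow> vfield y \<Longrightarrow> vfield (Kf a b y x)" by (simp add: Kf_def)

lemma ip_sym: "ip a b f g = ip a b g f"
  unfolding ip_def by (rule int_cong) (simp add: algebra_simps)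

lemma ip_add1: "vfield f \<Longrightarrow> vfield g \<Longrightarrow> vfield h \<Longrightarrow>
   ip a b (\<lambda>x. f x + g x) h = ip a b f h + ip a b g h"
  unfolding ip_def
  apply (subst int_add[symmetric]) apply simp_all
  apply (rule int_cong) apply (simp add: algebra_simps)
  done

lemma ip_cmult1: "vfield f \<Longrightarrow> ip a b (\<lambda>x. c * f x) h = c * ip a b f h"
  unfolding ip_def
  apply (subst int_cmult[symmetric])
  apply (rule int_cong) apply (simp add: algebra_simps)
  done

lemma ip_neg1: "vfield f \<Longrightarrow> ip a b (\<lambda>x. - f x) h = - ip a b f h"
  using ip_cmult1[of f a b "-1" h] by simp

lemma ip_diff1: "vfield f \<Longrightarrow> vfield g \<Longrightarrow> vfield h \<Longrightarrow>
   ip a b (\<lambda>x. f x - g x) h = ip a b f h - ip a b g h"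
  using ip_add1[of f "\<lambda>x. - g x" h a b] ip_neg1[of g a b h] by simp

lemma ip_zero1: "ip a b (\<lambda>x. 0) h = 0"
  unfolding ip_def by (simp add: int_zero)

lemma IP1: "vfield f \<Longrightarrow> vfield g \<Longrightarrow> ip a b f g = intS1 (\<lambda>x. Aop a b f x * g x)"
  unfolding ip_def Aop_def
  apply (rule int_ibp[where H = "\<lambda>x. b * (deriv f x * g x)"])
    apply simp_all
  apply (simp add: algebra_simps)
  done

lemma IP1s: "vfield f \<Longrightarrow> vfield g \<Longrightarrow> ip a b f g = intS1 (\<lambda>x. f x * Aop a b g x)"
  using IP1[of g f a b] ip_sym[of a b f g] by (simp add: mult.commute)

lemma IP2: "vfield w \<Longrightarrow> vfield v \<Longrightarrow> vfield u \<Longrightarrow>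
  ip a b (vbracket w v) u = intS1 (\<lambda>x. w x * Kf a b v u x)"
proof -
  assume w: "vfield w" and v: "vfield v" and u: "vfield u"
  define U where "U = Aop a b u"
  have U: "vfield U" unfolding U_def using u by simp
  have "ip a b (vbracket w v) u = intS1 (\<lambda>x. vbracket w v x * U x)"
    unfolding U_def using IP1s w v u by simp
  also have "\<dots> = intS1 (\<lambda>x. w x * (2 * U x * deriv v x + deriv U x * v x))"
    apply (rule int_ibp[where H = "\<lambda>x. - (w x * (U x * v x))"])
      apply (simp_all add: w v U)
    apply (simp add: vbracket_def w v U algebra_simps)
    done
  finally show ?thesis unfolding Kf_def U_def .
qed

lemma br_anti: "vbracket y x = (\<lambda>t. - vbracket x y t)"
  by (auto simp: vbracket_def)
lemma br_self: "vbracket x x = (\<lambda>t. 0)"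
  by (auto simp: vbracket_def)

lemma Nx_vf: "a > 0 \<Longrightarrow> b > 0 \<Longrightarrow> vfield x \<Longrightarrow> vfield y \<Longrightarrow> vfield (Nx a b x y)"
  unfolding Nx_def by (simp add: Ainv_vf)

lemma Aop_Nx: "a > 0 \<Longrightarrow> b > 0 \<Longrightarrow> vfield x \<Longrightarrow> vfield y \<Longrightarrow>
  Aop a b (Nx a b x y) t = (Aop a b (vbracket x y) t + Kf a b x y t + Kf a b y x t) / 2"
proof -
  assume a: "a > 0" and b: "b > 0" and x: "vfield x" and y: "vfield y"
  define G where "G = (\<lambda>s. Aop a b (vbracket x y) s + Kf a b x y s + Kf a b y x s)"
  have G: "vfield G" unfolding G_def using x y by simp
  have N: "Nx a b x y = (\<lambda>t. (1/2) * Ainv a b G t)" unfolding Nx_def G_def by auto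
  have "Aop a b (Nx a b x y) t = (1/2) * (a * Ainv a b G t - b * deriv (deriv (Ainv a b G)) t)"
    unfolding N Aop_def using Ainv_vf[OF a b G] by (simp add: algebra_simps)
  also have "\<dots> = G t / 2" using Ainv_ode[OF a b G] by simp
  finally show ?thesis unfolding G_def .
qed

lemma Kz: "a > 0 \<Longrightarrow> b > 0 \<Longrightarrow> vfield x \<Longrightarrow> vfield y \<Longrightarrow> vfield w \<Longrightarrow>
  ip a b (Nx a b x y) w = (ip a b (vbracket x y) w - ip a b (vbracket y w) x + ip a b (vbracket w x) y) / 2"
proof -
  assume a: "a > 0" and b: "b > 0" and x: "vfield x" and y: "vfield y" and w: "vfield w"
  have "ip a b (Nx a b x y) w = intS1 (\<lambda>t. ((Aop a b (vbracket x y) t * w t + w t * Kf a b x y t) + w t * Kf a b y x t) / 2)"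
    apply (subst IP1[OF Nx_vf[OF a b x y] w])
    apply (rule int_cong)
    apply (simp add: Aop_Nx[OF a b x y] algebra_simps)
    done
  also have "\<dots> = (1/2) * ((intS1 (\<lambda>t. Aop a b (vbracket x y) t * w t) + intS1 (\<lambda>t. w t * Kf a b x y t)) + intS1 (\<lambda>t. w t * Kf a b y x t))"
    apply (subst int_divc)
    apply (subst int_add) apply (simp_all add: x y w)
    apply (subst int_add) apply (simp_all add: x y w)
    done
  also have "\<dots> = (1/2) * ((ip a b (vbracket x y) w + ip a b (vbracket w x) y) + ip a b (vbracket w y) x)"
    using x y w IP1[of "vbracket x y" w a b] IP2[of w x y a b] IP2[of w y x a b] by simp
  also have "ip a b (vbracket w y) x = - ip a b (vbracket y w) x"
    using br_anti[of w y] ip_neg1[of "vbracket y w" a b x] y w by simp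
  finally show ?thesis by simp
qed

lemma nabla_eq: "a > 0 \<Longrightarrow> b > 0 \<Longrightarrow> vfield x \<Longrightarrow> vfield y \<Longrightarrow> nabla a b x y = Nx a b x y"
proof -
  assume a: "a > 0" and b: "b > 0" and x: "vfield x" and y: "vfield y"
  let ?P = "\<lambda>z. vfield z \<and> (\<forall>w. vfield w \<longrightarrow>
      ip a b z w = (ip a b (vbracket x y) w - ip a b (vbracket y w) x + ip a b (vbracket w x) y) / 2)"
  have P: "?P (Nx a b x y)" using Kz[OF a b x y] Nx_vf[OF a b x y] by blast
  have uniq: "z = Nx a b x y" if z: "?P z" for z
  proof -
    define d where "d = (\<lambda>t. z t - Nx a b x y t)"
    have vz: "vfield z" using z by blast
    have vd: "vfield d" unfolding d_def using vz Nx_vf[OF a b x y] by simp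
    have "ip a b d d = ip a b z d - ip a b (Nx a b x y) d"
      unfolding d_def by (rule ip_diff1[OF vz Nx_vf[OF a b x y] vd[unfolded d_def]])
    also have "\<dots> = 0"
    proof -
      have "ip a b z d = (ip a b (vbracket x y) d - ip a b (vbracket y d) x + ip a b (vbracket d x) y) / 2"
        using z vd by blast
      moreover have "ip a b (Nx a b x y) d = (ip a b (vbracket x y) d - ip a b (vbracket y d) x + ip a b (vbracket d x) y) / 2"
        using P vd by blast
      ultimately show ?thesis by simp
    qed
    finally have "d = (\<lambda>t. 0)" using ip_self_zero[OF a b vd] by blast
    then show ?thesis unfolding d_def by (simp add: fun_eq_iff)
  qed
  show ?thesis unfolding nabla_def
  proof (rule the_equality)
    show "?P (Nx a b x y)" by (rule P)
    fix z assume "?P z" then show "z = Nx a b x y" by (rule uniq)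
  qed
qed



lemma T_vf: "a > 0 \<Longrightarrow> b > 0 \<Longrightarrow> vfield x \<Longrightarrow> vfield y \<Longrightarrow> vfield (Tmap a b x y)"
  by (simp add: Tmap_Yf Ainv_vf)

lemma T_Aop: "a > 0 \<Longrightarrow> b > 0 \<Longrightarrow> vfield x \<Longrightarrow> vfield y \<Longrightarrow> Aop a b (Tmap a b x y) = Yf a b x y"
  unfolding Tmap_Yf Aop_def by (rule ext) (simp add: Ainv_ode)

lemma Aop_deriv: "vfield T \<Longrightarrow> Aop a b (deriv T) = deriv (Aop a b T)"
  unfolding Aop_def by simp

lemma N_explicit:
  assumes a: "a > 0" and b: "b > 0" and x: "vfield x" and y: "vfield y"
  shows "Nx a b x y = (\<lambda>t. x t * deriv y t + deriv (Tmap a b x y) t)"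
proof -
  define T where "T = Tmap a b x y"
  have vT: "vfield T" unfolding T_def using T_vf[OF a b x y] .
  have AT: "Aop a b T = Yf a b x y" unfolding T_def by (rule T_Aop[OF a b x y])
  define M where "M = (\<lambda>t. x t * deriv y t + deriv T t)"
  have vM: "vfield M" unfolding M_def using x y vT by simp
  have "Aop a b M t = Aop a b (\<lambda>t. x t * deriv y t) t + Aop a b (deriv T) t" for t
    unfolding M_def Aop_def using x y vT by (simp add: algebra_simps)
  also have "Aop a b (deriv T) t = deriv (Yf a b x y) t" for t
    using Aop_deriv[OF vT, of a b] AT by simp
  also have "Aop a b (\<lambda>t. x t * deriv y t) t + deriv (Yf a b x y) t
     = (Aop a b (vbracket x y) t + Kf a b x y t + Kf a b y x t) / 2" for t
    unfolding Aop_def Yf_def Kf_def vbracket_def using x y by (simp add: field_simps)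
  finally have AM: "Aop a b M t = (Aop a b (vbracket x y) t + Kf a b x y t + Kf a b y x t) / 2" for t .
  have "Nx a b x y = M"
    apply (rule Ainv_unique[OF a b Nx_vf[OF a b x y] vM, where f = "\<lambda>t. (Aop a b (vbracket x y) t + Kf a b x y t + Kf a b y x t) / 2"])
    using Aop_Nx[OF a b x y] AM unfolding Aop_def by auto
  then show ?thesis unfolding M_def T_def .
qed

lemma ip_NN:
  assumes b: "b > 0" and f1: "vfield f1" and f2: "vfield f2" and T1: "vfield T1" and T2: "vfield T2"
  shows "ip a b (\<lambda>t. f1 t + deriv T1 t) (\<lambda>t. f2 t + deriv T2 t)
    = intS1 (\<lambda>t. a * f1 t * f2 t + b * deriv f1 t * deriv f2 t + f1 t * deriv (Aop a b T2) t
         + f2 t * deriv (Aop a b T1) t + Aop a b T1 t * Aop a b T2 t / b) - a / b * ip a b T1 T2"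
proof -
  have "intS1 (\<lambda>t. a * f1 t * f2 t + b * deriv f1 t * deriv f2 t + f1 t * deriv (Aop a b T2) t
         + f2 t * deriv (Aop a b T1) t + Aop a b T1 t * Aop a b T2 t / b) - a / b * ip a b T1 T2
     = intS1 (\<lambda>t. (a * f1 t * f2 t + b * deriv f1 t * deriv f2 t + f1 t * deriv (Aop a b T2) t
         + f2 t * deriv (Aop a b T1) t + Aop a b T1 t * Aop a b T2 t / b) - a / b * (a * T1 t * T2 t + b * deriv T1 t * deriv T2 t))"
    unfolding ip_def
    apply (subst int_diff)
      apply (simp_all add: f1 f2 T1 T2)
    apply (simp add: int_cmult int_divc)
    done
  also have "\<dots> = ip a b (\<lambda>t. f1 t + deriv T1 t) (\<lambda>t. f2 t + deriv T2 t)"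
    unfolding ip_def
    apply (rule sym)
    apply (rule int_ibp[where H = "\<lambda>t. b * (f1 t * deriv (deriv T2) t) + b * (f2 t * deriv (deriv T1) t)
          + a * (T1 t * deriv T2 t + deriv T1 t * T2 t)"])
      apply (simp_all add: f1 f2 T1 T2)
    unfolding Aop_def using b f1 f2 T1 T2
    apply (simp add: field_simps)
    done
  finally show ?thesis by simp
qed

lemma ip_gN:
  assumes g: "vfield g" and f: "vfield f" and T: "vfield T"
  shows "ip a b g (\<lambda>t. f t + deriv T t)
    = intS1 (\<lambda>t. a * g t * f t + b * deriv g t * deriv f t + g t * deriv (Aop a b T) t)"
  unfolding ip_def
  apply (rule int_ibp[where H = "\<lambda>t. b * (g t * deriv (deriv T) t)"])
    apply (simp_all add: g f T)
  unfolding Aop_def using g f T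
  apply (simp add: algebra_simps)
  done



lemma S_reduce:
  assumes a: "a > 0" and b: "b > 0" and u: "vfield u" and v: "vfield v"
  shows "sect a b u v = - ip a b (Nx a b u u) (Nx a b v v) - ip a b (vbracket u v) (Nx a b u v)
     + ip a b (Nx a b u v) (Nx a b u v)
     - (intS1 (\<lambda>x. vbracket u v x * Kf a b v u x) + ip a b (vbracket u v) (vbracket u v)
        - intS1 (\<lambda>x. vbracket u v x * Kf a b u v x)) / 2"
proof -
  define c where "c = vbracket u v"
  define Nuu where "Nuu = Nx a b u u"
  define Nvv where "Nvv = Nx a b v v"
  define Nuv where "Nuv = Nx a b u v"
  have vc: "vfield c" unfolding c_def using u v by simp
  have vuu: "vfield Nuu" unfolding Nuu_def using Nx_vf[OF a b u u] .
  have vvv: "vfield Nvv" unfolding Nvv_def using Nx_vf[OF a b v v] .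
  have vuv: "vfield Nuv" unfolding Nuv_def using Nx_vf[OF a b u v] .
  have vX1: "vfield (Nx a b u Nvv)" using Nx_vf[OF a b u vvv] .
  have vX2: "vfield (Nx a b v Nuv)" using Nx_vf[OF a b v vuv] .
  have vX3: "vfield (Nx a b c v)" using Nx_vf[OF a b vc v] .
  have curv: "curv a b u v v = (\<lambda>x. Nx a b u Nvv x - Nx a b v Nuv x - Nx a b c v x)"
  proof -
    have e1: "nabla a b v v = Nvv" unfolding Nvv_def by (rule nabla_eq[OF a b v v])
    have e2: "nabla a b u v = Nuv" unfolding Nuv_def by (rule nabla_eq[OF a b u v])
    have e3: "nabla a b u Nvv = Nx a b u Nvv" by (rule nabla_eq[OF a b u vvv])
    have e4: "nabla a b v Nuv = Nx a b v Nuv" by (rule nabla_eq[OF a b v vuv])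
    have e5: "nabla a b c v = Nx a b c v" by (rule nabla_eq[OF a b vc v])
    show ?thesis unfolding curv_def e1 e2 c_def[symmetric] e3 e4 e5 ..
  qed
  have S: "sect a b u v = ip a b (Nx a b u Nvv) u - ip a b (Nx a b v Nuv) u - ip a b (Nx a b c v) u"
  proof -
    have "ip a b (\<lambda>x. Nx a b u Nvv x - Nx a b v Nuv x - Nx a b c v x) u
        = ip a b (\<lambda>x. Nx a b u Nvv x - Nx a b v Nuv x) u - ip a b (Nx a b c v) u"
      by (rule ip_diff1) (simp_all add: vX1 vX2 vX3 u)
    also have "ip a b (\<lambda>x. Nx a b u Nvv x - Nx a b v Nuv x) u = ip a b (Nx a b u Nvv) u - ip a b (Nx a b v Nuv) u"
      by (rule ip_diff1[OF vX1 vX2 u])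
    finally show ?thesis unfolding sect_def curv .
  qed
  have neg: "ip a b (vbracket y x) w = - ip a b (vbracket x y) w" if "vfield x" "vfield y" for x y w
  proof -
    have "vbracket y x = (\<lambda>t. - vbracket x y t)" by (rule br_anti)
    then show ?thesis using ip_neg1[OF vf_br[OF that], of a b w] by simp
  qed
  have zer: "ip a b (vbracket x x) w = 0" for x w
  proof -
    have "vbracket x x = (\<lambda>t. 0)" by (rule br_self)
    then show ?thesis using ip_zero1 by simp
  qed
  have X1: "ip a b (Nx a b u Nvv) u = - ip a b Nuu Nvv"
  proof -
    have "ip a b (Nx a b u Nvv) u = (ip a b (vbracket u Nvv) u - ip a b (vbracket Nvv u) u + ip a b (vbracket u u) Nvv) / 2"
      by (rule Kz[OF a b u vvv u])
    moreover have "ip a b Nuu Nvv = (ip a b (vbracket u u) Nvv - ip a b (vbracket u Nvv) u + ip a b (vbracket Nvv u) u) / 2"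
      unfolding Nuu_def by (rule Kz[OF a b u u vvv])
    moreover have "ip a b (vbracket Nvv u) u = - ip a b (vbracket u Nvv) u" using neg u vvv by blast
    ultimately show ?thesis using zer by simp
  qed
  have X2: "ip a b (Nx a b v Nuv) u = ip a b c Nuv - ip a b Nuv Nuv"
  proof -
    have "ip a b (Nx a b v Nuv) u = (ip a b (vbracket v Nuv) u - ip a b (vbracket Nuv u) v + ip a b (vbracket u v) Nuv) / 2"
      by (rule Kz[OF a b v vuv u])
    moreover have "ip a b Nuv Nuv = (ip a b (vbracket u v) Nuv - ip a b (vbracket v Nuv) u + ip a b (vbracket Nuv u) v) / 2"
      unfolding Nuv_def by (rule Kz[OF a b u v vuv[unfolded Nuv_def]])
    ultimately show ?thesis unfolding c_def by simp
  qed
  have X3: "ip a b (Nx a b c v) u = (intS1 (\<lambda>x. c x * Kf a b v u x) + ip a b c c - intS1 (\<lambda>x. c x * Kf a b u v x)) / 2"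
  proof -
    have "ip a b (Nx a b c v) u = (ip a b (vbracket c v) u - ip a b (vbracket v u) c + ip a b (vbracket u c) v) / 2"
      by (rule Kz[OF a b vc v u])
    moreover have "ip a b (vbracket v u) c = - ip a b c c" using neg[OF u v, of c] unfolding c_def .
    moreover have "ip a b (vbracket u c) v = - ip a b (vbracket c u) v" using neg[OF vc u] .
    moreover have "ip a b (vbracket c v) u = intS1 (\<lambda>x. c x * Kf a b v u x)" by (rule IP2[OF vc v u])
    moreover have "ip a b (vbracket c u) v = intS1 (\<lambda>x. c x * Kf a b u v x)" by (rule IP2[OF vc u v])
    ultimately show ?thesis by simp
  qed
  show ?thesis using S X1 X2 X3 unfolding c_def Nuu_def Nvv_def Nuv_def by simp
qed



lemma lin_comb:
  assumes "vfield LA" "vfield LB" "vfield LC" "vfield K1" "vfield IC" "vfield K2" "vfield C2"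
  shows "intS1 (\<lambda>t. - LA t - LB t + LC t - (K1 t + IC t - K2 t) / 2 + a / 2 * C2 t)
    = - intS1 LA - intS1 LB + intS1 LC - (intS1 K1 + intS1 IC - intS1 K2) / 2 + a / 2 * intS1 C2"
  using assms by (simp add: int_add int_diff int_neg int_divc int_cmult)

lemma part1:
  assumes a: "a > 0" and b: "b > 0" and u: "vfield u" and v: "vfield v"
  shows "sect a b u v =
           - a / 2 * intS1 (\<lambda>x. (u x * deriv v x - v x * deriv u x)^2)
           + a / b * ip a b (Tmap a b u u) (Tmap a b v v)
           - a / b * ip a b (Tmap a b u v) (Tmap a b u v)"
proof -
  define T1 where "T1 = Tmap a b u u"
  define T2 where "T2 = Tmap a b v v"
  define T3 where "T3 = Tmap a b u v"
  have vT1: "vfield T1" unfolding T1_def using T_vf[OF a b u u] .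
  have vT2: "vfield T2" unfolding T2_def using T_vf[OF a b v v] .
  have vT3: "vfield T3" unfolding T3_def using T_vf[OF a b u v] .
  have A1: "Aop a b T1 = Yf a b u u" unfolding T1_def using T_Aop[OF a b u u] .
  have A2: "Aop a b T2 = Yf a b v v" unfolding T2_def using T_Aop[OF a b v v] .
  have A3: "Aop a b T3 = Yf a b u v" unfolding T3_def using T_Aop[OF a b u v] .
  define c where "c = vbracket u v"
  have vc: "vfield c" unfolding c_def using u v by simp
  define LA where "LA = (\<lambda>t. a * (u t * deriv u t) * (v t * deriv v t)
     + b * deriv (\<lambda>t. u t * deriv u t) t * deriv (\<lambda>t. v t * deriv v t) t
     + (u t * deriv u t) * deriv (Yf a b v v) t + (v t * deriv v t) * deriv (Yf a b u u) t
     + Yf a b u u t * Yf a b v v t / b)"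
  define LB where "LB = (\<lambda>t. a * c t * (u t * deriv v t) + b * deriv c t * deriv (\<lambda>t. u t * deriv v t) t
     + c t * deriv (Yf a b u v) t)"
  define LC where "LC = (\<lambda>t. a * (u t * deriv v t) * (u t * deriv v t)
     + b * deriv (\<lambda>t. u t * deriv v t) t * deriv (\<lambda>t. u t * deriv v t) t
     + (u t * deriv v t) * deriv (Yf a b u v) t + (u t * deriv v t) * deriv (Yf a b u v) t
     + Yf a b u v t * Yf a b u v t / b)"
  define K1 where "K1 = (\<lambda>x. c x * Kf a b v u x)"
  define K2 where "K2 = (\<lambda>x. c x * Kf a b u v x)"
  define IC where "IC = (\<lambda>x. a * c x * c x + b * deriv c x * deriv c x)"
  define C2 where "C2 = (\<lambda>x. (u x * deriv v x - v x * deriv u x)^2)"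
  have N1: "ip a b (Nx a b u u) (Nx a b v v) = intS1 LA - a / b * ip a b T1 T2"
    unfolding N_explicit[OF a b u u] N_explicit[OF a b v v] T1_def[symmetric] T2_def[symmetric]
    using ip_NN[OF b _ _ vT1 vT2, of "\<lambda>t. u t * deriv u t" "\<lambda>t. v t * deriv v t" a] u v
    unfolding A1 A2 LA_def by simp
  have N2: "ip a b c (Nx a b u v) = intS1 LB"
    unfolding N_explicit[OF a b u v] T3_def[symmetric]
    using ip_gN[OF vc _ vT3, of "\<lambda>t. u t * deriv v t" a b] u v
    unfolding A3 LB_def by simp
  have N3: "ip a b (Nx a b u v) (Nx a b u v) = intS1 LC - a / b * ip a b T3 T3"
    unfolding N_explicit[OF a b u v] T3_def[symmetric]
    using ip_NN[OF b _ _ vT3 vT3, of "\<lambda>t. u t * deriv v t" "\<lambda>t. u t * deriv v t" a] u v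
    unfolding A3 LC_def by simp
  have S: "sect a b u v = - intS1 LA + a / b * ip a b T1 T2 - intS1 LB + intS1 LC - a / b * ip a b T3 T3
      - (intS1 K1 + intS1 IC - intS1 K2) / 2"
    using S_reduce[OF a b u v] N1 N2 N3 unfolding c_def[symmetric] K1_def K2_def IC_def ip_def[of a b c c]
    by simp
  have vall: "vfield LA" "vfield LB" "vfield LC" "vfield K1" "vfield IC" "vfield K2" "vfield C2"
    unfolding LA_def LB_def LC_def K1_def K2_def IC_def C2_def using u v vc by simp_all
  have loc: "intS1 (\<lambda>t. - LA t - LB t + LC t - (K1 t + IC t - K2 t) / 2 + a / 2 * C2 t) = 0"
  proof -
    have "intS1 (\<lambda>t. - LA t - LB t + LC t - (K1 t + IC t - K2 t) / 2 + a / 2 * C2 t) = intS1 (\<lambda>t. 0)"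
    proof (rule int_ibp[where H = "\<lambda>t. b / 2 * (- (deriv u t * deriv (deriv u) t * (v t * v t))
        + u t * deriv (deriv u) t * (v t * deriv v t) + u t * deriv u t * (v t * deriv (deriv v) t)
        - u t * u t * (deriv v t * deriv (deriv v) t))"])
      show "vfield (\<lambda>t. 0::real)" by simp
      show "vfield (\<lambda>t. b / 2 * (- (deriv u t * deriv (deriv u) t * (v t * v t))
        + u t * deriv (deriv u) t * (v t * deriv v t) + u t * deriv u t * (v t * deriv (deriv v) t)
        - u t * u t * (deriv v t * deriv (deriv v) t)))" using u v by simp
      fix t
      show "- LA t - LB t + LC t - (K1 t + IC t - K2 t) / 2 + a / 2 * C2 t = 0 + deriv (\<lambda>t. b / 2 * (- (deriv u t * deriv (deriv u) t * (v t * v t))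
        + u t * deriv (deriv u) t * (v t * deriv v t) + u t * deriv u t * (v t * deriv (deriv v) t)
        - u t * u t * (deriv v t * deriv (deriv v) t))) t"
        unfolding LA_def LB_def LC_def K1_def K2_def IC_def C2_def c_def Yf_def Kf_def Aop_def vbracket_def
        using u v b by (simp add: field_simps power2_eq_square)
    qed
    then show ?thesis by (simp add: int_zero)
  qed
  have "sect a b u v - (- a / 2 * intS1 C2 + a / b * ip a b T1 T2 - a / b * ip a b T3 T3) = 0"
    using S loc lin_comb[OF vall, of a] by simp
  then show ?thesis unfolding C2_def T1_def T2_def T3_def by simp
qed



lemma ip_divc1: "vfield f \<Longrightarrow> ip a b (\<lambda>x. f x / c) h = ip a b f h / c"
  unfolding ip_def
  apply (subst int_divc[symmetric])
  apply (rule int_cong)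
  apply (simp add: algebra_simps add_divide_distrib)
  done

lemma Q_eq:
  assumes a: "a > 0" and b: "b > 0" and x: "vfield x" and y: "vfield y"
  shows "Qmap a b x y = (\<lambda>t. (Aop a b (Tmap a b x y) t - a * Tmap a b x y t) / b)"
proof -
  have "Qmap a b x y = (\<lambda>t. - deriv (deriv (Tmap a b x y)) t)"
    unfolding Qmap_def Tmap_def ..
  then show ?thesis unfolding Aop_def using b by (auto simp: field_simps)
qed

lemma ip_Q:
  assumes b: "b > 0" and T1: "vfield T1" and T2: "vfield T2"
  shows "ip a b (\<lambda>t. (Aop a b T1 t - a * T1 t) / b) (\<lambda>t. (Aop a b T2 t - a * T2 t) / b)
    = (ip a b (Aop a b T1) (Aop a b T2) - 2 * a * intS1 (\<lambda>t. Aop a b T1 t * Aop a b T2 t)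
       + a^2 * ip a b T1 T2) / b^2"
proof -
  define Y1 where "Y1 = Aop a b T1"
  define Y2 where "Y2 = Aop a b T2"
  have vY1: "vfield Y1" unfolding Y1_def using T1 by simp
  have vY2: "vfield Y2" unfolding Y2_def using T2 by simp
  define Q2 where "Q2 = (\<lambda>t. (Y2 t - a * T2 t) / b)"
  have vQ2: "vfield Q2" unfolding Q2_def using vY2 T2 by simp
  have lin: "ip a b (\<lambda>t. (F t - a * G t) / b) h = (ip a b F h - a * ip a b G h) / b"
    if "vfield F" "vfield G" "vfield h" for F G h
  proof -
    have "ip a b (\<lambda>t. (F t - a * G t) / b) h = ip a b (\<lambda>t. F t - a * G t) h / b"
      by (rule ip_divc1) (simp add: that)
    also have "ip a b (\<lambda>t. F t - a * G t) h = ip a b F h - ip a b (\<lambda>t. a * G t) h"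
      by (rule ip_diff1) (simp_all add: that)
    also have "ip a b (\<lambda>t. a * G t) h = a * ip a b G h" by (rule ip_cmult1[OF that(2)])
    finally show ?thesis .
  qed
  have e1: "ip a b (\<lambda>t. (Y1 t - a * T1 t) / b) Q2 = (ip a b Y1 Q2 - a * ip a b T1 Q2) / b"
    by (rule lin[OF vY1 T1 vQ2])
  have e2: "ip a b Y1 Q2 = (ip a b Y2 Y1 - a * ip a b T2 Y1) / b"
    using ip_sym[of a b Y1 Q2] lin[OF vY2 T2 vY1] unfolding Q2_def by simp
  have e3: "ip a b T1 Q2 = (ip a b Y2 T1 - a * ip a b T2 T1) / b"
    using ip_sym[of a b T1 Q2] lin[OF vY2 T2 T1] unfolding Q2_def by simp
  have e4: "ip a b T2 Y1 = intS1 (\<lambda>t. Y1 t * Y2 t)"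
    using IP1[OF T2 vY1, of a b] unfolding Y2_def[symmetric] by (simp add: mult.commute)
  have e5: "ip a b Y2 T1 = intS1 (\<lambda>t. Y1 t * Y2 t)"
    using IP1s[OF vY2 T1, of a b] unfolding Y1_def[symmetric] by (simp add: mult.commute)
  have "ip a b (\<lambda>t. (Y1 t - a * T1 t) / b) Q2
     = (ip a b Y1 Y2 - 2 * a * intS1 (\<lambda>t. Y1 t * Y2 t) + a^2 * ip a b T1 T2) / b^2"
    unfolding e1 e2 e3 e4 e5 using b ip_sym[of a b Y2 Y1] ip_sym[of a b T2 T1]
    by (simp add: field_simps power2_eq_square)
  then show ?thesis unfolding Q2_def Y1_def Y2_def .
qed

lemma lin2:
  assumes "vfield Z2" "vfield P1" "vfield P3" "vfield R1" "vfield R3" "vfield C2"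
  shows "intS1 (\<lambda>t. Z2 t / a + (P1 t - P3 t) / (a * b) - 2 / b * (R1 t - R3 t) + a / 2 * C2 t)
    = intS1 Z2 / a + (intS1 P1 - intS1 P3) / (a * b) - 2 / b * (intS1 R1 - intS1 R3) + a / 2 * intS1 C2"
  using assms by (simp add: int_add int_diff int_divc int_cmult)

lemma part2:
  assumes a: "a > 0" and b: "b > 0" and u: "vfield u" and v: "vfield v"
  shows "sect a b u v =
           1 / a * intS1 (\<lambda>x. (a * (u x * deriv v x - v x * deriv u x)
                 + b / 2 * (deriv v x * deriv (deriv u) x - deriv u x * deriv (deriv v) x))^2)
           + b / a * ip a b (Qmap a b u u) (Qmap a b v v)
           - b / a * ip a b (Qmap a b u v) (Qmap a b u v)"
proof -
  define T1 where "T1 = Tmap a b u u"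
  define T2 where "T2 = Tmap a b v v"
  define T3 where "T3 = Tmap a b u v"
  have vT1: "vfield T1" unfolding T1_def using T_vf[OF a b u u] .
  have vT2: "vfield T2" unfolding T2_def using T_vf[OF a b v v] .
  have vT3: "vfield T3" unfolding T3_def using T_vf[OF a b u v] .
  have A1: "Aop a b T1 = Yf a b u u" unfolding T1_def using T_Aop[OF a b u u] .
  have A2: "Aop a b T2 = Yf a b v v" unfolding T2_def using T_Aop[OF a b v v] .
  have A3: "Aop a b T3 = Yf a b u v" unfolding T3_def using T_Aop[OF a b u v] .
  have Q12: "ip a b (Qmap a b u u) (Qmap a b v v) = (ip a b (Yf a b u u) (Yf a b v v)
       - 2 * a * intS1 (\<lambda>t. Yf a b u u t * Yf a b v v t) + a^2 * ip a b T1 T2) / b^2"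
    unfolding Q_eq[OF a b u u] Q_eq[OF a b v v] T1_def[symmetric] T2_def[symmetric]
    using ip_Q[OF b vT1 vT2, of a] unfolding A1 A2 .
  have Q33: "ip a b (Qmap a b u v) (Qmap a b u v) = (ip a b (Yf a b u v) (Yf a b u v)
       - 2 * a * intS1 (\<lambda>t. Yf a b u v t * Yf a b u v t) + a^2 * ip a b T3 T3) / b^2"
    unfolding Q_eq[OF a b u v] T3_def[symmetric]
    using ip_Q[OF b vT3 vT3, of a] unfolding A3 .
  define Z2 where "Z2 = (\<lambda>x. (a * (u x * deriv v x - v x * deriv u x)
                 + b / 2 * (deriv v x * deriv (deriv u) x - deriv u x * deriv (deriv v) x))^2)"
  define P1 where "P1 = (\<lambda>x. a * Yf a b u u x * Yf a b v v x + b * deriv (Yf a b u u) x * deriv (Yf a b v v) x)"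
  define P3 where "P3 = (\<lambda>x. a * Yf a b u v x * Yf a b u v x + b * deriv (Yf a b u v) x * deriv (Yf a b u v) x)"
  define R1 where "R1 = (\<lambda>t. Yf a b u u t * Yf a b v v t)"
  define R3 where "R3 = (\<lambda>t. Yf a b u v t * Yf a b u v t)"
  define C2 where "C2 = (\<lambda>x. (u x * deriv v x - v x * deriv u x)^2)"
  have vall: "vfield Z2" "vfield P1" "vfield P3" "vfield R1" "vfield R3" "vfield C2"
    unfolding Z2_def P1_def P3_def R1_def R3_def C2_def using u v by simp_all
  have "intS1 (\<lambda>t. Z2 t / a + (P1 t - P3 t) / (a * b) - 2 / b * (R1 t - R3 t) + a / 2 * C2 t) = intS1 (\<lambda>t. 0)"
  proof (rule int_cong)
    fix t
    show "Z2 t / a + (P1 t - P3 t) / (a * b) - 2 / b * (R1 t - R3 t) + a / 2 * C2 t = 0"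
      unfolding Z2_def P1_def P3_def R1_def R3_def C2_def Yf_def
      using u v a b by (simp add: field_simps power2_eq_square)
  qed
  then have loc: "intS1 Z2 / a + (intS1 P1 - intS1 P3) / (a * b) - 2 / b * (intS1 R1 - intS1 R3) + a / 2 * intS1 C2 = 0"
    using lin2[OF vall, of a b] by (simp add: int_zero)
  have p1: "sect a b u v = - a / 2 * intS1 C2 + a / b * ip a b T1 T2 - a / b * ip a b T3 T3"
    using part1[OF a b u v] unfolding C2_def T1_def T2_def T3_def .
  have "1 / a * intS1 Z2 + b / a * ip a b (Qmap a b u u) (Qmap a b v v) - b / a * ip a b (Qmap a b u v) (Qmap a b u v)
     = intS1 Z2 / a + (intS1 P1 - intS1 P3) / (a * b) - 2 / b * (intS1 R1 - intS1 R3)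
       + a / b * ip a b T1 T2 - a / b * ip a b T3 T3"
    unfolding Q12 Q33 ip_def[of a b "Yf a b u u"] ip_def[of a b "Yf a b u v"] P1_def[symmetric] P3_def[symmetric]
      R1_def[symmetric] R3_def[symmetric]
    using a b by (simp add: field_simps power2_eq_square)
  then show ?thesis using p1 loc unfolding Z2_def[symmetric] by simp
qed

theorem propositionA1:
  fixes a b :: real and u v :: "real \<Rightarrow> real"
  assumes "a > 0" and "b > 0" and "vfield u" and "vfield v"
  shows "(sect a b u v =
           - a / 2 * intS1 (\<lambda>x. (u x * deriv v x - v x * deriv u x)^2)
           + a / b * ip a b (Tmap a b u u) (Tmap a b v v)
           - a / b * ip a b (Tmap a b u v) (Tmap a b u v)) \<and>
         (sect a b u v =
           1 / a * intS1 (\<lambda>x. (a * (u x * deriv v x - v x * deriv u x)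
                 + b / 2 * (deriv v x * deriv (deriv u) x - deriv u x * deriv (deriv v) x))^2)
           + b / a * ip a b (Qmap a b u u) (Qmap a b v v)
           - b / a * ip a b (Qmap a b u v) (Qmap a b u v))"
  using part1[OF assms] part2[OF assms] by blast



end
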